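(* Let $P_p, P_e \in \mathbb{R}^{n\times n}$ be row-stochastic matrices, viewed as the transition matrices of two independent discrete-time Markov chains (a pursuer and an evader) on the node set $\{1,\dots,n\}$. The following statements are equivalent: (i) for every pair of nodes $i,j$, the meeting time $m_{i,j}$ is finite; (ii) for every pair of nodes $i,j$, there exist a node $k$ and a length $\ell\ge 1$ such that there is a walk of length $\ell$ from $i$ to $k$ for $P_p$ and a walk of length $\ell$ from $j$ to $k$ for $P_e$; (iii) for every pair of nodes $i,j$, there exists a walk of length at least $1$ for the stochastic matrix $P_e\otimes P_p$ from the Kronecker-graph node $(i,j)$ to a node $(k,k)$ for some $k\in\{1,\dots,n\}$; (iv) the row-substochastic matrix $(P_e\otimes P_p)E$ has spectral radius strictly less than $1$, where $E = I_{n^2} - \mathrm{diag}(\mathrm{vec}(I_n))$. Moreover, when these hold, the matrix $M=[m_{i,j}]$ of meeting times satisfies $$\mathrm{vec}(M) = \big(I_{n^2} - (P_e\otimes P_p)E\big)^{-1}\mathbf{1}_{n^2}.$$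
   Context: Let $X^{(p)}_t, X^{(e)}_t\in\{1,\dots,n\}$, $t=0,1,2,\dots$, be the positions of the pursuer and evader, evolving as independent Markov chains with transition matrices $P_p=[p^{(p)}_{i,j}]$ and $P_e=[p^{(e)}_{i,j}]$ (typically supported on the edges of a strongly connected digraph on $\{1,\dots,n\}$). The first meeting time from $i,j$ is $T_{i,j}=\min\{t\ge 1 : X^{(p)}_t = X^{(e)}_t\}$ given $X^{(p)}_0=i$, $X^{(e)}_0=j$ (with $T_{i,j}=\infty$ if they never meet; if $i=j$ this is the first time $t\ge1$ they meet again), and the meeting time is $m_{i,j}=\mathbb{E}[T_{i,j}]$. A walk of length $\ell$ from $i_1$ to $i_{\ell+1}$ for a matrix $P=[p_{a,b}]$ is a sequence of nodes $i_1,\dots,i_{\ell+1}$ with $p_{i_k,i_{k+1}}>0$ for $1\le k\le \ell$. $\otimes$ is the Kronecker product; the Kronecker graph has node set $\{1,\dots,n\}^2$, with node $(i,j)$ (pursuer at $i$, evader at $j$) corresponding to index $(j-1)n+i$ of $P_e\otimes P_p$. $\mathrm{vec}$ stacks the columns of a matrix into a vector (so $m_{i,j}$ is the $((j-1)n+i)$-th entry of $\mathrm{vec}(M)$), $\mathrm{diag}(v)$ is the diagonal matrix with diagonal $v$, and $\mathbf{1}_{N}$ is the all-ones vector in $\mathbb{R}^N$. *)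

theory Defs
  imports "Jordan_Normal_Form.Spectral_Radius" "Jordan_Normal_Form.Gauss_Jordan_Elimination"
    "HOL-Library.Extended_Nonnegative_Real"
begin

text \<open>Nodes are 0-based: node a of the paper's set {1..n} is index a-1 here, i.e. nodes are
  {0..<n}.  Kronecker-graph node (i,j) (pursuer at i, evader at j) is index j*n+i
  (0-based version of (j-1)n+i).\<close>

definition row_stochastic :: "nat \<Rightarrow> real mat \<Rightarrow> bool" where
  "row_stochastic n P \<longleftrightarrow> P \<in> carrier_mat n n \<and>
     (\<forall>i<n. \<forall>j<n. P $$ (i,j) \<ge> 0) \<and> (\<forall>i<n. (\<Sum>j<n. P $$ (i,j)) = 1)"

text \<open>A walk for matrix P on nodes {0..<N}: a nonempty node sequence with positive consecutive
  transition entries; its length is (length xs - 1).\<close>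
definition is_walk :: "nat \<Rightarrow> real mat \<Rightarrow> nat list \<Rightarrow> bool" where
  "is_walk N P xs \<longleftrightarrow> xs \<noteq> [] \<and> set xs \<subseteq> {..<N} \<and>
     (\<forall>k. Suc k < length xs \<longrightarrow> P $$ (xs ! k, xs ! Suc k) > 0)"

definition kron :: "real mat \<Rightarrow> real mat \<Rightarrow> real mat" where
  "kron A B = Matrix.mat (dim_row A * dim_row B) (dim_col A * dim_col B)
     (\<lambda>(r,c). A $$ (r div dim_row B, c div dim_col B) * B $$ (r mod dim_row B, c mod dim_col B))"

definition vec_of_mat :: "nat \<Rightarrow> real mat \<Rightarrow> real vec" where
  "vec_of_mat n M = Matrix.vec (n*n) (\<lambda>a. M $$ (a mod n, a div n))"

definition diag_of_vec :: "real vec \<Rightarrow> real mat" where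
  "diag_of_vec v = mat_diag (dim_vec v) (\<lambda>a. v $ a)"

definition E_mat :: "nat \<Rightarrow> real mat" where
  "E_mat n = 1\<^sub>m (n*n) - diag_of_vec (vec_of_mat n (1\<^sub>m n))"

definition path_prob :: "real mat \<Rightarrow> nat list \<Rightarrow> real" where
  "path_prob P xs = (\<Prod>k<length xs - 1. P $$ (xs ! k, xs ! Suc k))"

definition trajs :: "nat \<Rightarrow> nat \<Rightarrow> nat \<Rightarrow> nat list set" where
  "trajs n t i = {xs. length xs = Suc t \<and> set xs \<subseteq> {..<n} \<and> xs ! 0 = i}"

text \<open>P(T_{i,j} = t): joint law of two independent chains; first meeting at time t \<ge> 1.\<close>
definition meet_prob :: "nat \<Rightarrow> real mat \<Rightarrow> real mat \<Rightarrow> nat \<Rightarrow> nat \<Rightarrow> nat \<Rightarrow> real" where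
  "meet_prob n Pp Pe i j t = (if t = 0 then 0 else
     (\<Sum>xs\<in>trajs n t i. \<Sum>ys\<in>trajs n t j.
        if (\<forall>s. 1 \<le> s \<and> s < t \<longrightarrow> xs ! s \<noteq> ys ! s) \<and> xs ! t = ys ! t
        then path_prob Pp xs * path_prob Pe ys else 0))"

text \<open>m_{i,j} = E[T_{i,j}] in [0,\<infinity>], with T = \<infinity> on the event of never meeting.\<close>
definition meeting_time :: "nat \<Rightarrow> real mat \<Rightarrow> real mat \<Rightarrow> nat \<Rightarrow> nat \<Rightarrow> ennreal" where
  "meeting_time n Pp Pe i j =
     (\<Sum>t. of_nat t * ennreal (meet_prob n Pp Pe i j t)) +
     (if (\<Sum>t. ennreal (meet_prob n Pp Pe i j t)) < 1 then \<infinity> else 0)"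

end

theory Submission
  imports Defs
begin

lemma sum_split_mult: "(\<Sum>b<m*n. f b) = (\<Sum>l<m. \<Sum>k<n. f (l*n+k::nat))"
proof (induction m)
  case 0 then show ?case by simp
next
  case (Suc m)
  have "{..<Suc m * n} = {..<m*n} \<union> {m*n..<m*n+n}" by auto
  then have "(\<Sum>b<Suc m*n. f b) = (\<Sum>b<m*n. f b) + (\<Sum>b\<in>{m*n..<m*n+n}. f b)"
    by (metis sum.union_disjoint finite_lessThan finite_atLeastLessThan ivl_disj_int_one(2) lessThan_atLeast0)
  also have "(\<Sum>b\<in>{m*n..<m*n+n}. f b) = (\<Sum>k<n. f (m*n+k))"
    using sum.shift_bounds_nat_ivl[of f 0 "m*n" n] by (simp add: lessThan_atLeast0 add.commute)
  finally show ?case using Suc by simp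
qed

lemma div_mod_lt: "a < n*n \<Longrightarrow> a div n < (n::nat)"
  by (simp add: less_mult_imp_div_less)
lemma mod_lt: "a < n*n \<Longrightarrow> a mod n < (n::nat)"
  by (metis mod_less_divisor mult_0_right not_gr0 not_less0)
lemma lin_lt: "i < n \<Longrightarrow> j < n \<Longrightarrow> j*n+i < n*(n::nat)"
proof -
  assume "i<n" "j<n"
  then have "j*n+i < j*n+n" by simp
  also have "\<dots> = (Suc j)*n" by simp
  also have "\<dots> \<le> n*n" using \<open>j<n\<close> by (metis Suc_leI mult_le_mono1)
  finally show ?thesis .
qed

lemma lin_div: "i < n \<Longrightarrow> (j*n+i) div n = (j::nat)"
  by simp
lemma lin_mod: "i < n \<Longrightarrow> (j*n+i) mod n = (i::nat)"
  by simp

locale mt =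
  fixes n :: nat and Pp Pe :: "real mat"
  assumes n: "n > 0" and Pp: "row_stochastic n Pp" and Pe: "row_stochastic n Pe"
begin

definition "K = kron Pe Pp"
definition "A = K * E_mat n"
definition diagn :: "nat \<Rightarrow> bool" where "diagn b \<longleftrightarrow> b mod n = b div n"

lemma Pp_carr: "Pp \<in> carrier_mat n n" and Pe_carr: "Pe \<in> carrier_mat n n"
  using Pp Pe by (auto simp: row_stochastic_def)
lemma Pp_nonneg: "i<n \<Longrightarrow> k<n \<Longrightarrow> Pp$$(i,k) \<ge> 0"
  and Pe_nonneg: "i<n \<Longrightarrow> k<n \<Longrightarrow> Pe$$(i,k) \<ge> 0"
  using Pp Pe by (auto simp: row_stochastic_def)
lemma Pp_sum: "i<n \<Longrightarrow> (\<Sum>k<n. Pp$$(i,k)) = 1"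
  and Pe_sum: "i<n \<Longrightarrow> (\<Sum>k<n. Pe$$(i,k)) = 1"
  using Pp Pe by (auto simp: row_stochastic_def)

lemma K_carr: "K \<in> carrier_mat (n*n) (n*n)"
  using Pp_carr Pe_carr by (auto simp: K_def kron_def)

lemma K_entry: "a < n*n \<Longrightarrow> b < n*n \<Longrightarrow> K$$(a,b) = Pe$$(a div n, b div n) * Pp$$(a mod n, b mod n)"
  using Pp_carr Pe_carr by (auto simp: K_def kron_def)

lemma K_nonneg: "a < n*n \<Longrightarrow> b < n*n \<Longrightarrow> K$$(a,b) \<ge> 0"
  by (simp add: K_entry Pp_nonneg Pe_nonneg div_mod_lt mod_lt)

lemma E_carr: "E_mat n \<in> carrier_mat (n*n) (n*n)"
  unfolding E_mat_def diag_of_vec_def vec_of_mat_def by (intro minus_carrier_mat) auto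

lemma E_entry: "a < n*n \<Longrightarrow> b < n*n \<Longrightarrow> E_mat n $$ (a,b) = (if a = b \<and> \<not> diagn b then 1 else 0)"
  by (auto simp: E_mat_def diag_of_vec_def vec_of_mat_def mat_diag_def diagn_def div_mod_lt mod_lt)

lemma A_carr: "A \<in> carrier_mat (n*n) (n*n)"
  using K_carr E_carr by (auto simp: A_def)

lemma A_entry: "a < n*n \<Longrightarrow> b < n*n \<Longrightarrow> A$$(a,b) = (if diagn b then 0 else K$$(a,b))"
proof -
  assume a: "a < n*n" and b: "b < n*n"
  have "A$$(a,b) = (\<Sum>c = 0..<n*n. K$$(a,c) * E_mat n $$ (c,b))"
    using a b K_carr E_carr by (simp add: A_def index_mult_mat scalar_prod_def)
  also have "\<dots> = (\<Sum>c = 0..<n*n. if c = b then K$$(a,c) * E_mat n $$ (c,b) else 0)"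
    by (rule sum.cong, auto simp: E_entry b)
  also have "\<dots> = K$$(a,b) * E_mat n $$ (b,b)" using b by simp
  finally show ?thesis using b by (simp add: E_entry)
qed

lemma A_nonneg: "a < n*n \<Longrightarrow> b < n*n \<Longrightarrow> A$$(a,b) \<ge> 0"
  by (simp add: A_entry K_nonneg)
lemma A_le_K: "a < n*n \<Longrightarrow> b < n*n \<Longrightarrow> A$$(a,b) \<le> K$$(a,b)"
  by (simp add: A_entry K_nonneg)

lemma K_rowsum: "a < n*n \<Longrightarrow> (\<Sum>b<n*n. K$$(a,b)) = 1"
proof -
  assume a: "a < n*n"
  have "(\<Sum>b<n*n. K$$(a,b)) = (\<Sum>l<n. \<Sum>k<n. K$$(a, l*n+k))" by (rule sum_split_mult)
  also have "\<dots> = (\<Sum>l<n. \<Sum>k<n. Pe$$(a div n, l) * Pp$$(a mod n, k))"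
    using a n by (intro sum.cong refl) (simp add: K_entry lin_lt)
  also have "\<dots> = (\<Sum>l<n. Pe$$(a div n, l)) * (\<Sum>k<n. Pp$$(a mod n, k))"
    by (simp add: sum_product)
  also have "\<dots> = 1" using a by (simp add: Pp_sum Pe_sum div_mod_lt mod_lt)
  finally show ?thesis .
qed

lemma mult_vec_entry: "M \<in> carrier_mat (n*n) (n*n) \<Longrightarrow> v \<in> carrier_vec (n*n) \<Longrightarrow> a < n*n \<Longrightarrow>
   (M *\<^sub>v v) $ a = (\<Sum>b<n*n. M$$(a,b) * v$b)"
  by (simp add: index_mult_mat_vec scalar_prod_def atLeast0LessThan)

lemma finite_trajs: "finite (trajs n t i)"
proof -
  have "trajs n t i \<subseteq> {xs. set xs \<subseteq> {..<n} \<and> length xs = Suc t}" by (auto simp: trajs_def)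
  then show ?thesis using finite_lists_length_eq[of "{..<n}" "Suc t"] finite_subset by blast
qed

lemma trajs_0: "k < n \<Longrightarrow> trajs n 0 k = {[k]}"
  by (auto simp: trajs_def length_Suc_conv)

lemma trajs_Suc_eq: "i < n \<Longrightarrow> trajs n (Suc t) i = Cons i ` (\<Union>k<n. trajs n t k)"
proof (intro equalityI subsetI)
  fix xs assume i: "i < n" and xs: "xs \<in> trajs n (Suc t) i"
  then obtain y ws where xs_eq: "xs = y # ws" and "length ws = Suc t"
    by (auto simp: trajs_def length_Suc_conv)
  with xs have "y = i" "ws \<in> trajs n t (ws!0)" "ws!0 < n"
    by (auto simp: trajs_def subset_eq)
  then show "xs \<in> Cons i ` (\<Union>k<n. trajs n t k)" using xs_eq by blast
next
  fix xs assume i: "i < n" and "xs \<in> Cons i ` (\<Union>k<n. trajs n t k)"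
  then obtain k ws where "k < n" "ws \<in> trajs n t k" "xs = i # ws" by blast
  then show "xs \<in> trajs n (Suc t) i" using i by (auto simp: trajs_def)
qed

lemma trajs_Suc_sum: "i < n \<Longrightarrow> sum g (trajs n (Suc t) i) = (\<Sum>k<n. \<Sum>ws\<in>trajs n t k. g (i # ws))"
proof -
  assume i: "i < n"
  have "sum g (trajs n (Suc t) i) = sum (g \<circ> Cons i) (\<Union>k<n. trajs n t k)"
    unfolding trajs_Suc_eq[OF i] by (rule sum.reindex) (simp add: inj_on_def)
  also have "\<dots> = (\<Sum>k<n. sum (g \<circ> Cons i) (trajs n t k))"
    by (rule sum.UNION_disjoint) (auto simp: finite_trajs, auto simp: trajs_def)
  finally show ?thesis by simp
qed

lemma path_prob_Cons: "xs \<noteq> [] \<Longrightarrow> path_prob P (i # xs) = P$$(i, xs!0) * path_prob P xs"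
proof -
  assume "xs \<noteq> []"
  then obtain m where m: "length xs = Suc m" by (cases xs) auto
  have "path_prob P (i # xs) = (\<Prod>k<Suc m. P $$ ((i#xs) ! k, (i#xs) ! Suc k))"
    by (simp add: path_prob_def m)
  also have "\<dots> = P$$(i, xs!0) * (\<Prod>k<m. P $$ ((i#xs) ! Suc k, (i#xs) ! Suc (Suc k)))"
    by (subst prod.lessThan_Suc_shift) simp
  also have "\<dots> = P$$(i, xs!0) * path_prob P xs" by (simp add: path_prob_def m)
  finally show ?thesis .
qed

lemma path_prob_nonneg: "P \<in> carrier_mat n n \<Longrightarrow> (\<And>a b. a<n \<Longrightarrow> b<n \<Longrightarrow> P$$(a,b) \<ge> 0) \<Longrightarrow>
   set xs \<subseteq> {..<n} \<Longrightarrow> path_prob P xs \<ge> 0"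
  unfolding path_prob_def by (intro prod_nonneg) (auto simp: subset_eq)

lemma meet_prob_expand: "i < n \<Longrightarrow> j < n \<Longrightarrow> meet_prob n Pp Pe i j (Suc t) =
  (\<Sum>k<n. \<Sum>l<n. \<Sum>xs\<in>trajs n t k. \<Sum>ys\<in>trajs n t l.
     if (\<forall>s. 1 \<le> s \<and> s < Suc t \<longrightarrow> (i#xs) ! s \<noteq> (j#ys) ! s) \<and> (i#xs) ! Suc t = (j#ys) ! Suc t
     then path_prob Pp (i#xs) * path_prob Pe (j#ys) else 0)"
proof -
  assume i: "i < n" and j: "j < n"
  show ?thesis
    unfolding meet_prob_def
    apply (simp only: trajs_Suc_sum[OF i] trajs_Suc_sum[OF j] if_False nat.distinct)
    apply (intro sum.cong refl)
    apply (subst sum.swap)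
    apply simp
    done
qed

lemma mp_1: "i < n \<Longrightarrow> j < n \<Longrightarrow> meet_prob n Pp Pe i j (Suc 0) = (\<Sum>k<n. Pp$$(i,k) * Pe$$(j,k))"
proof -
  assume i: "i < n" and j: "j < n"
  have "meet_prob n Pp Pe i j (Suc 0) = (\<Sum>k<n. \<Sum>l<n. if k = l then Pp$$(i,k) * Pe$$(j,l) else 0)"
    unfolding meet_prob_expand[OF i j]
    by (intro sum.cong refl) (simp add: trajs_0 path_prob_Cons path_prob_def)
  also have "\<dots> = (\<Sum>k<n. Pp$$(i,k) * Pe$$(j,k))"
    by (intro sum.cong refl) (simp add: sum.delta)
  finally show ?thesis .
qed

lemma cond_shift: "(\<forall>s. 1 \<le> s \<and> s < Suc (Suc t) \<longrightarrow> (i#xs)!s \<noteq> (j#ys)!s) \<longleftrightarrow>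
   xs!0 \<noteq> ys!0 \<and> (\<forall>s. 1 \<le> s \<and> s < Suc t \<longrightarrow> xs!s \<noteq> ys!s)"
proof
  assume H: "\<forall>s. 1 \<le> s \<and> s < Suc (Suc t) \<longrightarrow> (i#xs)!s \<noteq> (j#ys)!s"
  have "xs!0 \<noteq> ys!0" using H[rule_format, of 1] by simp
  moreover have "\<forall>s. 1 \<le> s \<and> s < Suc t \<longrightarrow> xs!s \<noteq> ys!s"
  proof (intro allI impI)
    fix s assume "1 \<le> s \<and> s < Suc t"
    then show "xs!s \<noteq> ys!s" using H[rule_format, of "Suc s"] by simp
  qed
  ultimately show "xs!0 \<noteq> ys!0 \<and> (\<forall>s. 1 \<le> s \<and> s < Suc t \<longrightarrow> xs!s \<noteq> ys!s)" ..
next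
  assume H: "xs!0 \<noteq> ys!0 \<and> (\<forall>s. 1 \<le> s \<and> s < Suc t \<longrightarrow> xs!s \<noteq> ys!s)"
  show "\<forall>s. 1 \<le> s \<and> s < Suc (Suc t) \<longrightarrow> (i#xs)!s \<noteq> (j#ys)!s"
  proof (intro allI impI)
    fix s assume s: "1 \<le> s \<and> s < Suc (Suc t)"
    then obtain s' where s': "s = Suc s'" by (cases s) auto
    show "(i#xs)!s \<noteq> (j#ys)!s"
    proof (cases s')
      case 0 then show ?thesis using H s' by simp
    next
      case (Suc s'') then show ?thesis using H s s' by auto
    qed
  qed
qed

lemma mp_Suc_Suc: "i < n \<Longrightarrow> j < n \<Longrightarrow> meet_prob n Pp Pe i j (Suc (Suc t)) =
  (\<Sum>k<n. \<Sum>l<n. (if k = l then 0 else Pp$$(i,k) * Pe$$(j,l)) * meet_prob n Pp Pe k l (Suc t))"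
proof -
  assume i: "i < n" and j: "j < n"
  show ?thesis
    unfolding meet_prob_expand[OF i j]
  proof (intro sum.cong refl)
    fix k l assume k: "k \<in> {..<n}" and l: "l \<in> {..<n}"
    let ?c = "(if k = l then 0 else Pp$$(i,k) * Pe$$(j,l))"
    have "(\<Sum>xs\<in>trajs n (Suc t) k. \<Sum>ys\<in>trajs n (Suc t) l.
     if (\<forall>s. 1 \<le> s \<and> s < Suc (Suc t) \<longrightarrow> (i#xs) ! s \<noteq> (j#ys) ! s) \<and> (i#xs) ! Suc (Suc t) = (j#ys) ! Suc (Suc t)
     then path_prob Pp (i#xs) * path_prob Pe (j#ys) else 0) =
      (\<Sum>xs\<in>trajs n (Suc t) k. \<Sum>ys\<in>trajs n (Suc t) l. ?c *
        (if (\<forall>s. 1 \<le> s \<and> s < Suc t \<longrightarrow> xs ! s \<noteq> ys ! s) \<and> xs ! Suc t = ys ! Suc t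
         then path_prob Pp xs * path_prob Pe ys else 0))"
    proof (intro sum.cong refl)
      fix xs ys assume xs: "xs \<in> trajs n (Suc t) k" and ys: "ys \<in> trajs n (Suc t) l"
      then have ne: "xs \<noteq> []" "ys \<noteq> []" and x0: "xs!0 = k" and y0: "ys!0 = l"
        by (auto simp: trajs_def)
      show "(if (\<forall>s. 1 \<le> s \<and> s < Suc (Suc t) \<longrightarrow> (i#xs) ! s \<noteq> (j#ys) ! s) \<and> (i#xs) ! Suc (Suc t) = (j#ys) ! Suc (Suc t)
     then path_prob Pp (i#xs) * path_prob Pe (j#ys) else 0) = ?c *
        (if (\<forall>s. 1 \<le> s \<and> s < Suc t \<longrightarrow> xs ! s \<noteq> ys ! s) \<and> xs ! Suc t = ys ! Suc t
         then path_prob Pp xs * path_prob Pe ys else 0)"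
        unfolding cond_shift by (auto simp: path_prob_Cons ne x0 y0)
    qed
    also have "\<dots> = ?c * meet_prob n Pp Pe k l (Suc t)"
      unfolding meet_prob_def by (simp add: sum_distrib_left)
    finally show "(\<Sum>xs\<in>trajs n (Suc t) k. \<Sum>ys\<in>trajs n (Suc t) l.
     if (\<forall>s. 1 \<le> s \<and> s < Suc (Suc t) \<longrightarrow> (i#xs) ! s \<noteq> (j#ys) ! s) \<and> (i#xs) ! Suc (Suc t) = (j#ys) ! Suc (Suc t)
     then path_prob Pp (i#xs) * path_prob Pe (j#ys) else 0) = ?c * meet_prob n Pp Pe k l (Suc t)" .
  qed
qed

definition ones :: "real vec" where "ones = vec (n*n) (\<lambda>_. 1)"

fun qv :: "nat \<Rightarrow> real vec" where
  "qv 0 = ones"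
| "qv (Suc t) = A *\<^sub>v qv t"

lemma qv_carr: "qv t \<in> carrier_vec (n*n)"
  using A_carr by (induction t) (auto simp: ones_def)

lemma A_pow_carr: "A ^\<^sub>m t \<in> carrier_mat (n*n) (n*n)"
  using A_carr by simp

lemma A_pow_comm: "A * A ^\<^sub>m t = A ^\<^sub>m t * A"
proof (induction t)
  case 0 then show ?case using A_carr by simp
next
  case (Suc t)
  have "A * A ^\<^sub>m Suc t = (A * A ^\<^sub>m t) * A"
    using A_carr by (simp add: assoc_mult_mat[of A "n*n" "n*n" "A ^\<^sub>m t" "n*n" A "n*n"])
  then show ?case using Suc by simp
qed

lemma qv_pow: "qv t = A ^\<^sub>m t *\<^sub>v ones"
proof (induction t)
  case 0 then show ?case using A_carr by (simp add: ones_def)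
next
  case (Suc t)
  have "A ^\<^sub>m Suc t *\<^sub>v ones = (A * A ^\<^sub>m t) *\<^sub>v ones" using A_pow_comm by simp
  also have "\<dots> = A *\<^sub>v (A ^\<^sub>m t *\<^sub>v ones)"
    using A_carr by (intro assoc_mult_mat_vec) (auto simp: ones_def)
  finally show ?case using Suc by simp
qed

lemma qv_nonneg: "a < n*n \<Longrightarrow> qv t $ a \<ge> 0"
proof (induction t arbitrary: a)
  case 0 then show ?case by (simp add: ones_def)
next
  case (Suc t)
  show ?case
    by (simp only: qv.simps mult_vec_entry[OF A_carr qv_carr Suc.prems])
      (auto intro!: sum_nonneg mult_nonneg_nonneg A_nonneg Suc.IH Suc.prems)
qed

lemma A_vec_entry: "x \<in> carrier_vec (n*n) \<Longrightarrow> i < n \<Longrightarrow> j < n \<Longrightarrow>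
  (A *\<^sub>v x) $ (j*n+i) = (\<Sum>k<n. \<Sum>l<n. (if k = l then 0 else Pp$$(i,k) * Pe$$(j,l)) * x $ (l*n+k))"
proof -
  assume x: "x \<in> carrier_vec (n*n)" and i: "i < n" and j: "j < n"
  have a: "j*n+i < n*n" using lin_lt i j .
  have "(A *\<^sub>v x) $ (j*n+i) = (\<Sum>l<n. \<Sum>k<n. A$$(j*n+i, l*n+k) * x$(l*n+k))"
    using mult_vec_entry[OF A_carr x a] sum_split_mult by simp
  also have "\<dots> = (\<Sum>l<n. \<Sum>k<n. (if k = l then 0 else Pp$$(i,k) * Pe$$(j,l)) * x $ (l*n+k))"
    using i j a by (intro sum.cong refl) (auto simp: A_entry K_entry lin_lt diagn_def)
  also have "\<dots> = (\<Sum>k<n. \<Sum>l<n. (if k = l then 0 else Pp$$(i,k) * Pe$$(j,l)) * x $ (l*n+k))"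
    by (rule sum.swap)
  finally show ?thesis .
qed

lemma mp_qv: "i < n \<Longrightarrow> j < n \<Longrightarrow> meet_prob n Pp Pe i j (Suc t) = qv t $ (j*n+i) - qv (Suc t) $ (j*n+i)"
proof (induction t arbitrary: i j)
  case 0
  have "(\<Sum>k<n. \<Sum>l<n. Pp$$(i,k) * Pe$$(j,l)) = (\<Sum>k<n. Pp$$(i,k)) * (\<Sum>l<n. Pe$$(j,l))"
    by (simp add: sum_product)
  also have "\<dots> = 1" using 0 by (simp add: Pp_sum Pe_sum)
  finally have one: "(\<Sum>k<n. \<Sum>l<n. Pp$$(i,k) * Pe$$(j,l)) = 1" .
  have "(\<Sum>k<n. \<Sum>l<n. Pp$$(i,k) * Pe$$(j,l)) =
     (\<Sum>k<n. \<Sum>l<n. (if k = l then 0 else Pp$$(i,k) * Pe$$(j,l))) + (\<Sum>k<n. \<Sum>l<n. if k = l then Pp$$(i,k) * Pe$$(j,l) else 0)"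
    by (simp only: sum.distrib[symmetric]) (intro sum.cong refl, simp)
  also have "(\<Sum>k<n. \<Sum>l<n. if k = l then Pp$$(i,k) * Pe$$(j,l) else 0) = (\<Sum>k<n. Pp$$(i,k) * Pe$$(k,k) * 0 + Pp$$(i,k) * Pe$$(j,k))"
    by (intro sum.cong refl) (simp add: sum.delta)
  finally have "1 = (\<Sum>k<n. \<Sum>l<n. (if k = l then 0 else Pp$$(i,k) * Pe$$(j,l))) + (\<Sum>k<n. Pp$$(i,k) * Pe$$(j,k))"
    using one by simp
  moreover have "qv (Suc 0) $ (j*n+i) = (\<Sum>k<n. \<Sum>l<n. (if k = l then 0 else Pp$$(i,k) * Pe$$(j,l)))"
    using A_vec_entry[of ones i j] 0 lin_lt[of i n j] by (simp add: ones_def lin_lt)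
  ultimately show ?case using 0 mp_1[of i j] lin_lt[of i n j] by (simp add: ones_def)
next
  case (Suc t)
  have "meet_prob n Pp Pe i j (Suc (Suc t)) =
    (\<Sum>k<n. \<Sum>l<n. (if k = l then 0 else Pp$$(i,k) * Pe$$(j,l)) * (qv t $ (l*n+k) - qv (Suc t) $ (l*n+k)))"
    using Suc by (simp add: mp_Suc_Suc)
  also have "\<dots> = (\<Sum>k<n. \<Sum>l<n. (if k = l then 0 else Pp$$(i,k) * Pe$$(j,l)) * qv t $ (l*n+k))
     - (\<Sum>k<n. \<Sum>l<n. (if k = l then 0 else Pp$$(i,k) * Pe$$(j,l)) * qv (Suc t) $ (l*n+k))"
    by (simp add: sum_subtractf right_diff_distrib)
  also have "\<dots> = (A *\<^sub>v qv t) $ (j*n+i) - (A *\<^sub>v qv (Suc t)) $ (j*n+i)"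
    by (simp only: A_vec_entry[OF qv_carr Suc.prems(1) Suc.prems(2)])
  also have "\<dots> = qv (Suc t) $ (j*n+i) - qv (Suc (Suc t)) $ (j*n+i)" by simp
  finally show ?case .
qed

lemma mp_nonneg: "meet_prob n Pp Pe i j t \<ge> 0"
  unfolding meet_prob_def
  by (auto intro!: sum_nonneg mult_nonneg_nonneg path_prob_nonneg[OF Pp_carr] path_prob_nonneg[OF Pe_carr]
      Pp_nonneg Pe_nonneg simp: trajs_def)

lemma meeting_time_eq:
  assumes i: "i < n" and j: "j < n" and c: "0 \<le> c" "c < 1"
    and bound: "\<And>t. qv t $ (j*n+i) \<le> D * c^t"
  shows "summable (\<lambda>t. qv t $ (j*n+i))"
    and "meeting_time n Pp Pe i j = ennreal (\<Sum>t. qv t $ (j*n+i))"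
proof -
  define q where "q t = qv t $ (j*n+i)" for t
  define F where "F t = meet_prob n Pp Pe i j t" for t
  have a: "j*n+i < n*n" using lin_lt i j .
  have q0: "\<And>t. q t \<ge> 0" using qv_nonneg a by (simp add: q_def)
  have q1: "q 0 = 1" using a by (simp add: q_def ones_def)
  have F0: "F 0 = 0" by (simp add: F_def meet_prob_def)
  have FS: "\<And>t. F (Suc t) = q t - q (Suc t)" using mp_qv i j by (simp add: F_def q_def)
  have Fnn: "\<And>t. F t \<ge> 0" by (simp add: F_def mp_nonneg)
  have Dc: "(\<lambda>t. D * c^t) \<longlonglongrightarrow> 0"
    using c by (intro tendsto_mult_right_zero LIMSEQ_power_zero) auto
  have qlim: "q \<longlonglongrightarrow> 0"
    by (rule tendsto_sandwich[of "\<lambda>_. 0" _ _ "\<lambda>t. D * c^t"])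
       (use q0 bound Dc in \<open>auto simp: q_def\<close>)
  have sumq: "summable q"
  proof (rule summable_comparison_test[of _ "\<lambda>t. D * c^t"])
    show "\<exists>N. \<forall>t\<ge>N. norm (q t) \<le> D * c^t" using q0 bound by (auto simp: q_def)
    show "summable (\<lambda>t. D * c^t)" using c by (intro summable_mult summable_geometric) auto
  qed
  then show "summable (\<lambda>t. qv t $ (j*n+i))" unfolding q_def[abs_def] .
  have "(\<lambda>t. q t - q (Suc t)) sums (q 0 - 0)" by (rule telescope_sums'[OF qlim])
  then have "(\<lambda>t. F (Suc t)) sums 1" using q1 FS by simp
  then have "F sums 1" using F0 sums_Suc_iff[of F 1] by simp
  then have "(\<Sum>t. ennreal (F t)) = ennreal 1" by (rule suminf_ennreal_eq[OF Fnn])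
  then have sF: "(\<Sum>t. ennreal (F t)) = 1" by simp
  define S where "S N = (\<Sum>t<Suc N. real t * F t)" for N
  have S_eq: "S N = (\<Sum>t<N. q t) - real N * q N" for N
  proof (induction N)
    case 0 then show ?case by (simp add: S_def)
  next
    case (Suc N)
    have "S (Suc N) = S N + real (Suc N) * F (Suc N)" by (simp add: S_def)
    also have "\<dots> = (\<Sum>t<Suc N. q t) - real (Suc N) * q (Suc N)"
      using Suc by (simp add: FS algebra_simps)
    finally show ?case .
  qed
  have Nq: "(\<lambda>N. real N * q N) \<longlonglongrightarrow> 0"
  proof (rule tendsto_sandwich[of "\<lambda>_. 0" _ _ "\<lambda>N. D * (of_nat N * c^N)"])
    show "\<forall>\<^sub>F N in sequentially. 0 \<le> real N * q N" using q0 by simp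
    show "\<forall>\<^sub>F N in sequentially. real N * q N \<le> D * (of_nat N * c^N)"
    proof (intro always_eventually allI)
      fix N
      have "q N \<le> D * c^N" using bound by (simp add: q_def)
      then have "real N * q N \<le> real N * (D * c^N)" by (rule mult_left_mono) simp
      then show "real N * q N \<le> D * (of_nat N * c^N)" by (simp add: ac_simps)
    qed
    show "(\<lambda>N. D * (of_nat N * c^N)) \<longlonglongrightarrow> 0"
      using c by (intro tendsto_mult_right_zero powser_times_n_limit_0) auto
    show "(\<lambda>_. 0) \<longlonglongrightarrow> (0::real)" by (rule tendsto_const)
  qed
  have "(\<lambda>N. (\<Sum>t<N. q t) - real N * q N) \<longlonglongrightarrow> (\<Sum>t. q t) - 0"
    by (intro tendsto_diff summable_LIMSEQ[OF sumq] Nq)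
  then have "(\<lambda>N. S N) \<longlonglongrightarrow> (\<Sum>t. q t)" by (simp only: S_eq diff_zero)
  then have "(\<lambda>N. \<Sum>t<Suc N. real t * F t) \<longlonglongrightarrow> (\<Sum>t. q t)" by (simp only: S_def)
  then have "(\<lambda>N. \<Sum>t<N. real t * F t) \<longlonglongrightarrow> (\<Sum>t. q t)" by (rule LIMSEQ_imp_Suc)
  then have "(\<lambda>t. real t * F t) sums (\<Sum>t. q t)" by (simp only: sums_def)
  then have "(\<Sum>t. ennreal (real t * F t)) = ennreal (\<Sum>t. q t)"
    using Fnn by (intro suminf_ennreal_eq) auto
  moreover have "\<And>t. of_nat t * ennreal (F t) = ennreal (real t * F t)"
    using Fnn by (simp add: ennreal_mult ennreal_of_nat_eq_real_of_nat)
  ultimately have "(\<Sum>t. of_nat t * ennreal (F t)) = ennreal (\<Sum>t. q t)" by simp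
  then show "meeting_time n Pp Pe i j = ennreal (\<Sum>t. qv t $ (j*n+i))"
    unfolding meeting_time_def using sF by (simp add: F_def q_def)
qed

end

lemma pow_smult_mat: "M \<in> carrier_mat m m \<Longrightarrow> (k \<cdot>\<^sub>m M) ^\<^sub>m t = (k::'a::comm_ring_1)^t \<cdot>\<^sub>m (M ^\<^sub>m t)"
proof (induction t)
  case 0 then show ?case by (intro eq_matI) auto
next
  case (Suc t)
  have "(k \<cdot>\<^sub>m M) ^\<^sub>m Suc t = (k^t \<cdot>\<^sub>m (M ^\<^sub>m t)) * (k \<cdot>\<^sub>m M)" using Suc by simp
  also have "\<dots> = k^t \<cdot>\<^sub>m ((M ^\<^sub>m t) * (k \<cdot>\<^sub>m M))"
    using Suc.prems by (intro mult_smult_assoc_mat) auto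
  also have "\<dots> = k^t \<cdot>\<^sub>m (k \<cdot>\<^sub>m ((M ^\<^sub>m t) * M))"
    using Suc.prems by (subst mult_smult_distrib) auto
  also have "\<dots> = k^Suc t \<cdot>\<^sub>m (M ^\<^sub>m Suc t)"
    by (intro eq_matI) (auto simp: ac_simps)
  finally show ?case .
qed

context mt begin

lemma geometric_bound:
  assumes sr: "spectral_radius (map_mat complex_of_real A) < 1"
  shows "\<exists>D c. 0 \<le> c \<and> c < 1 \<and> (\<forall>t a. a < n*n \<longrightarrow> qv t $ a \<le> D * c^t)"
proof -
  define Ac where "Ac = map_mat complex_of_real A"
  have Ac: "Ac \<in> carrier_mat (n*n) (n*n)" using A_carr by (simp add: Ac_def)
  have N: "n*n > 0" using n by simp
  define r where "r = spectral_radius Ac"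
  have "r \<in> norm ` spectrum Ac" unfolding r_def by (rule spectral_radius_mem_max(1)[OF Ac N])
  then have r0: "r \<ge> 0" by auto
  have r1: "r < 1" using sr by (simp add: r_def Ac_def)
  define c where "c = (r + 1) / 2"
  have c: "0 < c" "c < 1" "r < c" using r0 r1 by (auto simp: c_def)
  define Bc where "Bc = complex_of_real (1/c) \<cdot>\<^sub>m Ac"
  have Bc: "Bc \<in> carrier_mat (n*n) (n*n)" using Ac by (simp add: Bc_def)
  have "spectral_radius Bc \<in> norm ` spectrum Bc" by (rule spectral_radius_mem_max(1)[OF Bc N])
  then obtain mu where mu: "mu \<in> spectrum Bc" and rB: "spectral_radius Bc = norm mu" by auto
  from mu obtain v where ev: "eigenvector Bc v mu" by (auto simp: spectrum_def eigenvalue_def)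
  then have v: "v \<in> carrier_vec (n*n)" "v \<noteq> 0\<^sub>v (n*n)" and Bv: "Bc *\<^sub>v v = mu \<cdot>\<^sub>v v"
    using Bc by (auto simp: eigenvector_def)
  have "Ac *\<^sub>v v = (complex_of_real c * mu) \<cdot>\<^sub>v v"
  proof (rule eq_vecI)
    fix a assume a: "a < dim_vec ((complex_of_real c * mu) \<cdot>\<^sub>v v)"
    then have a': "a < n*n" using v by simp
    have "(Bc *\<^sub>v v) $ a = (mu \<cdot>\<^sub>v v) $ a" using Bv by simp
    then have "complex_of_real (1/c) * (row Ac a \<bullet> v) = mu * v $ a"
      using a' Ac v by (simp add: Bc_def index_mult_mat_vec scalar_prod_def sum_distrib_left ac_simps)
    then have "row Ac a \<bullet> v = complex_of_real c * mu * v $ a"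
      using c by (simp add: field_simps)
    then show "(Ac *\<^sub>v v) $ a = ((complex_of_real c * mu) \<cdot>\<^sub>v v) $ a"
      using a' Ac v by simp
  qed (use Ac v in auto)
  then have "eigenvector Ac v (complex_of_real c * mu)" using v Ac by (simp add: eigenvector_def)
  then have "complex_of_real c * mu \<in> spectrum Ac" by (auto simp: spectrum_def eigenvalue_def)
  then have "norm (complex_of_real c * mu) \<le> r"
    unfolding r_def by (intro spectral_radius_mem_max(2)[OF Ac N]) auto
  then have "c * norm mu \<le> r" using c by (simp add: norm_mult)
  then have "norm mu < 1" using c
    by (metis dual_order.strict_trans1 mult.right_neutral mult_less_cancel_left_pos not_less)
  then have "spectral_radius Bc < 1" using rB by simp
  from spectral_radius_jnf_norm_bound_less_1_upper_triangular[OF Bc this]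
  obtain C where C: "\<And>k. norm_bound (Bc ^\<^sub>m k) C" by auto
  have entry: "(A ^\<^sub>m t) $$ (a,b) \<le> C * c^t" if ab: "a < n*n" "b < n*n" for t a b
  proof -
    have "Bc ^\<^sub>m t = complex_of_real (1/c) ^ t \<cdot>\<^sub>m (Ac ^\<^sub>m t)"
      unfolding Bc_def by (rule pow_smult_mat[OF Ac])
    also have "Ac ^\<^sub>m t = map_mat complex_of_real (A ^\<^sub>m t)"
      unfolding Ac_def by (rule of_real_hom.mat_hom_pow[OF A_carr, symmetric])
    finally have "(Bc ^\<^sub>m t) $$ (a,b) = complex_of_real ((1/c)^t * ((A ^\<^sub>m t) $$ (a,b)))"
      using ab A_carr by simp
    then have "norm ((Bc ^\<^sub>m t) $$ (a,b)) = \<bar>(1/c)^t * ((A ^\<^sub>m t) $$ (a,b))\<bar>"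
      by (simp only: norm_of_real)
    moreover have "norm ((Bc ^\<^sub>m t) $$ (a,b)) \<le> C"
      using C[of t] ab Bc unfolding norm_bound_def by auto
    ultimately have "\<bar>(1/c)^t * ((A ^\<^sub>m t) $$ (a,b))\<bar> \<le> C" by simp
    then have "(1/c)^t * ((A ^\<^sub>m t) $$ (a,b)) \<le> C" by simp
    then have "c^t * ((1/c)^t * ((A ^\<^sub>m t) $$ (a,b))) \<le> c^t * C"
      using c by (intro mult_left_mono) auto
    then show ?thesis using c by (simp add: power_one_over field_simps)
  qed
  have "qv t $ a \<le> (real (n*n) * C) * c^t" if a: "a < n*n" for t a
  proof -
    have "qv t $ a = (\<Sum>b<n*n. (A ^\<^sub>m t) $$ (a,b) * ones $ b)"
      unfolding qv_pow by (rule mult_vec_entry[OF A_pow_carr _ a]) (simp add: ones_def)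
    also have "\<dots> \<le> (\<Sum>b<n*n. C * c^t)"
      by (intro sum_mono) (simp add: ones_def entry a)
    finally show ?thesis by simp
  qed
  then show ?thesis using c by (intro exI[of _ "real (n*n) * C"] exI[of _ c]) auto
qed


lemma sr_less:
  assumes reach: "\<And>a. a < n*n \<Longrightarrow> \<exists>k<n. \<exists>zs. is_walk (n*n) K zs \<and> length zs \<ge> 2 \<and> hd zs = a \<and> last zs = k*n+k"
  shows "spectral_radius (map_mat complex_of_real A) < 1"
proof (rule ccontr)
  assume "\<not> ?thesis"
  then have r1: "spectral_radius (map_mat complex_of_real A) \<ge> 1" by simp
  define Ac where "Ac = map_mat complex_of_real A"
  have Ac: "Ac \<in> carrier_mat (n*n) (n*n)" using A_carr by (simp add: Ac_def)
  have N: "n*n > 0" using n by simp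
  have "spectral_radius Ac \<in> norm ` spectrum Ac" by (rule spectral_radius_mem_max(1)[OF Ac N])
  then obtain lam where lam: "lam \<in> spectrum Ac" and lr: "norm lam \<ge> 1"
    using r1 by (auto simp: Ac_def)
  from lam obtain v where ev: "eigenvector Ac v lam" by (auto simp: spectrum_def eigenvalue_def)
  then have v: "v \<in> carrier_vec (n*n)" "v \<noteq> 0\<^sub>v (n*n)" and Av: "Ac *\<^sub>v v = lam \<cdot>\<^sub>v v"
    using Ac by (auto simp: eigenvector_def)
  define u where "u b = norm (v $ b)" for b
  have u0: "u b \<ge> 0" for b by (simp add: u_def)
  define M where "M = Max (u ` {..<n*n})"
  have Mge: "u b \<le> M" if "b < n*n" for b unfolding M_def using that by (intro Max_ge) auto
  obtain a0 where a0: "a0 < n*n" "u a0 = M"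
    unfolding M_def using Max_in[of "u ` {..<n*n}"] N by fastforce
  obtain b0 where b0: "b0 < n*n" "v $ b0 \<noteq> 0"
  proof -
    have "\<exists>b<n*n. v $ b \<noteq> 0"
    proof (rule ccontr)
      assume "\<not> (\<exists>b<n*n. v $ b \<noteq> 0)"
      then have "v = 0\<^sub>v (n*n)" using v by (intro eq_vecI) auto
      then show False using v by simp
    qed
    then show ?thesis using that by blast
  qed
  have "u b0 > 0" using b0(2) by (simp add: u_def)
  then have Mpos: "M > 0" using Mge[OF b0(1)] by linarith
  have ineq: "u a \<le> (\<Sum>b<n*n. A$$(a,b) * u b)" if a: "a < n*n" for a
  proof -
    have "(Ac *\<^sub>v v) $ a = (\<Sum>b<n*n. complex_of_real (A$$(a,b)) * v$b)" using a Ac v A_carr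
      by (simp add: Ac_def index_mult_mat_vec scalar_prod_def atLeast0LessThan)
    moreover have "(Ac *\<^sub>v v) $ a = lam * v $ a" using Av a v by simp
    ultimately have "lam * v $ a = (\<Sum>b<n*n. complex_of_real (A$$(a,b)) * v$b)" by simp
    then have "norm lam * u a = norm (\<Sum>b<n*n. complex_of_real (A$$(a,b)) * v$b)"
      unfolding u_def by (metis norm_mult)
    also have "\<dots> \<le> (\<Sum>b<n*n. norm (complex_of_real (A$$(a,b)) * v$b))" by (rule norm_sum)
    also have "\<dots> = (\<Sum>b<n*n. A$$(a,b) * u b)"
      using a by (intro sum.cong refl) (simp add: norm_mult u_def A_nonneg)
    finally have "norm lam * u a \<le> (\<Sum>b<n*n. A$$(a,b) * u b)" .
    moreover have "u a \<le> norm lam * u a" using lr u0[of a] by (simp add: mult_le_cancel_right1)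
    ultimately show ?thesis by linarith
  qed
  have key: "\<not> diagn b \<and> u b = M" if w: "w < n*n" "u w = M" and b: "b < n*n" "K$$(w,b) > 0" for w b
  proof -
    have t0: "\<And>b'. b' \<in> {..<n*n} \<Longrightarrow> 0 \<le> K$$(w,b') * M - A$$(w,b') * u b'"
    proof -
      fix b' assume "b' \<in> {..<n*n}"
      then have b': "b' < n*n" by simp
      have "A$$(w,b') * u b' \<le> K$$(w,b') * u b'" using A_le_K[OF w(1) b'] u0 by (rule mult_right_mono)
      also have "\<dots> \<le> K$$(w,b') * M" using Mge[OF b'] K_nonneg[OF w(1) b'] by (rule mult_left_mono)
      finally show "0 \<le> K$$(w,b') * M - A$$(w,b') * u b'" by simp
    qed
    have "(\<Sum>b'<n*n. K$$(w,b') * M - A$$(w,b') * u b') = M - (\<Sum>b'<n*n. A$$(w,b') * u b')"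
      using K_rowsum[OF w(1)] by (simp add: sum_subtractf sum_distrib_right[symmetric])
    also have "\<dots> \<le> 0" using ineq[OF w(1)] w(2) by simp
    finally have "(\<Sum>b'<n*n. K$$(w,b') * M - A$$(w,b') * u b') = 0"
      using sum_nonneg[of "{..<n*n}" "\<lambda>b'. K$$(w,b') * M - A$$(w,b') * u b'", OF t0] by linarith
    then have "K$$(w,b) * M - A$$(w,b) * u b = 0"
      using sum_nonneg_eq_0_iff[of "{..<n*n}", OF _ t0] b by auto
    then show ?thesis using b Mpos w
      by (auto simp: A_entry split: if_splits)
  qed
  obtain k zs where k: "k < n" and zs: "is_walk (n*n) K zs" "length zs \<ge> 2" "hd zs = a0" "last zs = k*n+k"
    using reach[OF a0(1)] by blast
  have inv: "u (zs!s) = M \<and> (s > 0 \<longrightarrow> \<not> diagn (zs!s))" if "s < length zs" for s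
    using that
  proof (induction s)
    case 0 then show ?case using zs a0 by (simp add: hd_conv_nth[symmetric] is_walk_def)
  next
    case (Suc s)
    have sl: "zs!s < n*n" "zs!Suc s < n*n" using Suc.prems zs(1) by (auto simp: is_walk_def subset_eq)
    have "K$$(zs!s, zs!Suc s) > 0" using Suc.prems zs(1) by (auto simp: is_walk_def)
    then show ?case using key[OF sl(1) _ sl(2)] Suc by simp
  qed
  have "length zs - 1 < length zs" "length zs - 1 > 0" using zs(2) by auto
  from inv[OF this(1)] this(2) have "\<not> diagn (zs ! (length zs - 1))" by simp
  moreover have "zs ! (length zs - 1) = k*n+k" using zs(2,4) last_conv_nth[of zs] by (cases zs) auto
  ultimately show False using k by (simp add: diagn_def)
qed


lemma sum_nz: "sum f S \<noteq> 0 \<Longrightarrow> \<exists>x\<in>S. f x \<noteq> 0"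
  by (meson sum.neutral)

lemma finite_walks:
  assumes i: "i < n" and j: "j < n" and fin: "meeting_time n Pp Pe i j < \<infinity>"
  shows "\<exists>k<n. \<exists>xs ys. is_walk n Pp xs \<and> is_walk n Pe ys \<and> length xs = length ys \<and> length xs \<ge> 2 \<and>
         hd xs = i \<and> last xs = k \<and> hd ys = j \<and> last ys = k"
proof -
  have "\<exists>t. meet_prob n Pp Pe i j t \<noteq> 0"
  proof (rule ccontr)
    assume "\<not> ?thesis"
    then have "(\<Sum>t. ennreal (meet_prob n Pp Pe i j t)) = 0" by simp
    then have "meeting_time n Pp Pe i j = \<infinity>"
      unfolding meeting_time_def by simp
    then show False using fin by simp
  qed
  then obtain t where t: "meet_prob n Pp Pe i j t \<noteq> 0" by blast
  have t0: "t \<noteq> 0"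
  proof
    assume "t = 0" with t show False by (simp add: meet_prob_def)
  qed
  with t obtain xs ys where xs: "xs \<in> trajs n t i" and ys: "ys \<in> trajs n t j"
    and nz: "(if (\<forall>s. 1 \<le> s \<and> s < t \<longrightarrow> xs ! s \<noteq> ys ! s) \<and> xs ! t = ys ! t
        then path_prob Pp xs * path_prob Pe ys else 0) \<noteq> 0"
  proof -
    have "(\<Sum>xs\<in>trajs n t i. \<Sum>ys\<in>trajs n t j.
        if (\<forall>s. 1 \<le> s \<and> s < t \<longrightarrow> xs ! s \<noteq> ys ! s) \<and> xs ! t = ys ! t
        then path_prob Pp xs * path_prob Pe ys else 0) \<noteq> 0"
      using t t0 by (simp add: meet_prob_def)
    from sum_nz[OF this] obtain xs where xs: "xs \<in> trajs n t i" and "(\<Sum>ys\<in>trajs n t j.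
        if (\<forall>s. 1 \<le> s \<and> s < t \<longrightarrow> xs ! s \<noteq> ys ! s) \<and> xs ! t = ys ! t
        then path_prob Pp xs * path_prob Pe ys else 0) \<noteq> 0" by blast
    from sum_nz[OF this(2)] obtain ys where "ys \<in> trajs n t j" "(if (\<forall>s. 1 \<le> s \<and> s < t \<longrightarrow> xs ! s \<noteq> ys ! s) \<and> xs ! t = ys ! t
        then path_prob Pp xs * path_prob Pe ys else 0) \<noteq> 0" by blast
    from that[OF xs this] show ?thesis .
  qed
  from nz have meet: "xs ! t = ys ! t" and pz: "path_prob Pp xs \<noteq> 0" "path_prob Pe ys \<noteq> 0"
    by (auto split: if_splits)
  have lx: "length xs = Suc t" and ly: "length ys = Suc t" and sx: "set xs \<subseteq> {..<n}"
    and sy: "set ys \<subseteq> {..<n}" and x0: "xs!0 = i" and y0: "ys!0 = j"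
    using xs ys by (auto simp: trajs_def)
  have walk: "is_walk n P zs" if P: "P \<in> carrier_mat n n" "\<And>a b. a<n \<Longrightarrow> b<n \<Longrightarrow> P$$(a,b) \<ge> 0"
    and zs: "set zs \<subseteq> {..<n}" "zs \<noteq> []" "path_prob P zs \<noteq> 0" for P zs
    unfolding is_walk_def
  proof (intro conjI allI impI zs)
    fix k assume k: "Suc k < length zs"
    have "P $$ (zs ! k, zs ! Suc k) \<noteq> 0"
      using zs(3) k unfolding path_prob_def by (auto simp: prod_zero_iff)
    moreover have "P $$ (zs ! k, zs ! Suc k) \<ge> 0"
      using k zs(1) by (intro P(2)) (auto simp: subset_eq)
    ultimately show "P $$ (zs ! k, zs ! Suc k) > 0" by simp
  qed
  have wx: "is_walk n Pp xs" using lx by (intro walk[OF Pp_carr Pp_nonneg sx _ pz(1)]) auto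
  have wy: "is_walk n Pe ys" using ly by (intro walk[OF Pe_carr Pe_nonneg sy _ pz(2)]) auto
  have "xs ! t < n" using sx lx by (auto simp: subset_eq)
  moreover have "last xs = xs ! t" using lx last_conv_nth[of xs] by (cases xs) auto
  moreover have "last ys = ys ! t" using ly last_conv_nth[of ys] by (cases ys) auto
  moreover have "hd xs = i" using lx x0 by (cases xs) auto
  moreover have "hd ys = j" using ly y0 by (cases ys) auto
  ultimately show ?thesis using wx wy lx ly t0 meet
    by (intro exI[of _ "xs ! t"] conjI exI[of _ xs] exI[of _ ys]) auto
qed

lemma walks_kron:
  assumes i: "i < n" and j: "j < n" and k: "k < n"
    and w: "is_walk n Pp xs" "is_walk n Pe ys" "length xs = length ys" "length xs \<ge> 2"
       "hd xs = i" "last xs = k" "hd ys = j" "last ys = k"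
  shows "\<exists>zs. is_walk (n*n) K zs \<and> length zs \<ge> 2 \<and> hd zs = j*n+i \<and> last zs = k*n+k"
proof -
  define L where "L = length xs"
  define zs where "zs = map (\<lambda>s. ys!s*n + xs!s) [0..<L]"
  have xsn: "xs!s < n" if "s < L" for s using w(1) that by (auto simp: is_walk_def L_def subset_eq)
  have ysn: "ys!s < n" if "s < L" for s using w(2,3) that by (auto simp: is_walk_def L_def subset_eq)
  have zl: "length zs = L" by (simp add: zs_def)
  have zn: "zs!s = ys!s*n + xs!s" if "s < L" for s using that by (simp add: zs_def)
  have "is_walk (n*n) K zs" unfolding is_walk_def
  proof (intro conjI allI impI)
    show "zs \<noteq> []" using w(4) zl by (auto simp: L_def)
    show "set zs \<subseteq> {..<n*n}" using xsn ysn lin_lt by (auto simp: zs_def)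
    fix s assume s: "Suc s < length zs"
    then have s': "s < L" "Suc s < L" using zl by auto
    have "K $$ (zs!s, zs!Suc s) = Pe$$(ys!s, ys!Suc s) * Pp$$(xs!s, xs!Suc s)"
      using s' xsn ysn by (simp add: zn K_entry lin_lt lin_div lin_mod)
    moreover have "Pe$$(ys!s, ys!Suc s) > 0" using w(2,3) s' by (auto simp: is_walk_def L_def)
    moreover have "Pp$$(xs!s, xs!Suc s) > 0" using w(1) s' by (auto simp: is_walk_def L_def)
    ultimately show "K $$ (zs!s, zs!Suc s) > 0" by simp
  qed
  moreover have ne: "xs \<noteq> []" "ys \<noteq> []" "zs \<noteq> []" using w(3,4) zl by (auto simp: L_def)
  moreover have "hd zs = j*n+i"
    using ne w(3,4,5,7) zl zn[of 0] by (simp add: hd_conv_nth L_def)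
  moreover have "last zs = k*n+k"
    using ne w(3,4,6,8) zl zn[of "L - 1"] by (simp add: last_conv_nth L_def)
  ultimately show ?thesis using zl w(4) by (auto simp: L_def)
qed

lemma formula:
  assumes sr: "spectral_radius (map_mat complex_of_real A) < 1"
  shows "\<exists>B. mat_inverse (1\<^sub>m (n*n) - A) = Some B \<and>
        (\<forall>i<n. \<forall>j<n. meeting_time n Pp Pe i j = ennreal ((B *\<^sub>v Matrix.vec (n*n) (\<lambda>_. 1)) $ (j*n+i)))"
proof -
  obtain D c where c: "0 \<le> c" "c < 1" and bd: "\<And>t a. a < n*n \<Longrightarrow> qv t $ a \<le> D * c^t"
    using geometric_bound[OF sr] by blast
  have summ: "summable (\<lambda>t. qv t $ a)" if a: "a < n*n" for a
  proof (rule summable_comparison_test[of _ "\<lambda>t. D * c^t"])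
    show "\<exists>N. \<forall>t\<ge>N. norm (qv t $ a) \<le> D * c^t" using qv_nonneg[OF a] bd[OF a] by auto
    show "summable (\<lambda>t. D * c^t)" using c by (intro summable_mult summable_geometric) auto
  qed
  define mv where "mv = vec (n*n) (\<lambda>a. \<Sum>t. qv t $ a)"
  have mv: "mv \<in> carrier_vec (n*n)" by (simp add: mv_def)
  have IA: "1\<^sub>m (n*n) - A \<in> carrier_mat (n*n) (n*n)" using A_carr by (intro minus_carrier_mat) auto
  have Amv: "(A *\<^sub>v mv) $ a = mv $ a - 1" if a: "a < n*n" for a
  proof -
    have "(A *\<^sub>v mv) $ a = (\<Sum>b<n*n. A$$(a,b) * (\<Sum>t. qv t $ b))"
      using mult_vec_entry[OF A_carr mv a] by (simp add: mv_def)
    also have "\<dots> = (\<Sum>b<n*n. \<Sum>t. A$$(a,b) * qv t $ b)"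
      by (intro sum.cong refl suminf_mult[symmetric] summ) simp
    also have "\<dots> = (\<Sum>t. \<Sum>b<n*n. A$$(a,b) * qv t $ b)"
      by (rule suminf_sum[symmetric]) (intro summable_mult summ, simp)
    also have "\<dots> = (\<Sum>t. qv (Suc t) $ a)"
      using a by (simp add: mult_vec_entry[OF A_carr qv_carr a])
    also have "\<dots> = (\<Sum>t. qv t $ a) - qv 0 $ a" by (rule suminf_split_head[OF summ[OF a]])
    finally show ?thesis using a by (simp add: mv_def ones_def)
  qed
  have sol: "(1\<^sub>m (n*n) - A) *\<^sub>v mv = ones"
  proof (rule eq_vecI)
    fix a assume "a < dim_vec ones"
    then have a: "a < n*n" by (simp add: ones_def)
    have "((1\<^sub>m (n*n) - A) *\<^sub>v mv) $ a = (\<Sum>b<n*n. (1\<^sub>m (n*n) - A)$$(a,b) * mv$b)"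
      by (rule mult_vec_entry[OF IA mv a])
    also have "\<dots> = (\<Sum>b<n*n. (if a = b then mv$b else 0) - A$$(a,b) * mv$b)"
      using a A_carr by (intro sum.cong refl) (auto simp: left_diff_distrib)
    also have "\<dots> = mv$a - (A *\<^sub>v mv) $ a"
      using a by (simp add: sum_subtractf mult_vec_entry[OF A_carr mv a])
    finally show "((1\<^sub>m (n*n) - A) *\<^sub>v mv) $ a = ones $ a" using a Amv[OF a] by (simp add: ones_def)
  qed (use A_carr in \<open>simp add: ones_def\<close>)
  have det: "det (1\<^sub>m (n*n) - A) \<noteq> 0"
  proof
    assume "det (1\<^sub>m (n*n) - A) = 0"
    then obtain x where x: "x \<in> carrier_vec (n*n)" "x \<noteq> 0\<^sub>v (n*n)" "(1\<^sub>m (n*n) - A) *\<^sub>v x = 0\<^sub>v (n*n)"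
      using det_0_iff_vec_prod_zero[OF IA] by blast
    have fix_x: "x $ a = (\<Sum>b<n*n. A$$(a,b) * x$b)" if a: "a < n*n" for a
    proof -
      have "0 = ((1\<^sub>m (n*n) - A) *\<^sub>v x) $ a" using x(3) a by simp
      also have "\<dots> = (\<Sum>b<n*n. (1\<^sub>m (n*n) - A)$$(a,b) * x$b)" by (rule mult_vec_entry[OF IA x(1) a])
      also have "\<dots> = (\<Sum>b<n*n. (if a = b then x$b else 0) - A$$(a,b) * x$b)"
        using a A_carr by (intro sum.cong refl) (auto simp: left_diff_distrib)
      also have "\<dots> = x$a - (\<Sum>b<n*n. A$$(a,b) * x$b)" using a by (simp add: sum_subtractf)
      finally show ?thesis by simp
    qed
    define X where "X = Max ((\<lambda>b. \<bar>x$b\<bar>) ` {..<n*n})"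
    have Xge: "\<bar>x$b\<bar> \<le> X" if "b < n*n" for b using that unfolding X_def by (intro Max_ge) auto
    have bnd: "\<bar>x$a\<bar> \<le> X * qv t $ a" if "a < n*n" for a t
      using that
    proof (induction t arbitrary: a)
      case 0 then show ?case using Xge by (simp add: ones_def)
    next
      case (Suc t)
      have "\<bar>x$a\<bar> = \<bar>\<Sum>b<n*n. A$$(a,b) * x$b\<bar>" using fix_x[OF Suc.prems] by simp
      also have "\<dots> \<le> (\<Sum>b<n*n. \<bar>A$$(a,b) * x$b\<bar>)" by (rule sum_abs)
      also have "\<dots> \<le> (\<Sum>b<n*n. A$$(a,b) * (X * qv t $ b))"
        using Suc.prems by (intro sum_mono) (auto simp: abs_mult A_nonneg intro!: mult_left_mono Suc.IH)
      also have "\<dots> = X * qv (Suc t) $ a"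
        using Suc.prems by (simp add: mult_vec_entry[OF A_carr qv_carr] sum_distrib_left ac_simps)
      finally show ?case .
    qed
    have X0: "X \<ge> 0" using Xge[of 0] n by (meson abs_ge_zero order_trans nat_0_less_mult_iff)
    have "x $ a = 0" if a: "a < n*n" for a
    proof -
      have lim: "(\<lambda>t. X * (D * c^t)) \<longlonglongrightarrow> 0"
        using c by (intro tendsto_mult_right_zero LIMSEQ_power_zero) auto
      have "\<forall>t. \<bar>x$a\<bar> \<le> X * (D * c^t)"
        using bnd[OF a] bd[OF a] X0 by (meson mult_left_mono order_trans)
      then have "\<bar>x$a\<bar> \<le> 0" by (intro LIMSEQ_le_const[OF lim]) auto
      then show ?thesis by simp
    qed
    then have "x = 0\<^sub>v (n*n)" using x(1) by (intro eq_vecI) auto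
    then show False using x(2) by simp
  qed
  obtain B where B: "mat_inverse (1\<^sub>m (n*n) - A) = Some B"
  proof (cases "mat_inverse (1\<^sub>m (n*n) - A)")
    case None
    then have "1\<^sub>m (n*n) - A \<notin> Units (ring_mat TYPE(real) (n*n) undefined)" by (rule mat_inverse(1)[OF IA])
    moreover have "1\<^sub>m (n*n) - A \<in> Units (ring_mat TYPE(real) (n*n) undefined)"
      by (rule det_non_zero_imp_unit[OF IA det])
    ultimately show ?thesis by blast
  qed auto
  from mat_inverse(2)[OF IA B] have BI: "B * (1\<^sub>m (n*n) - A) = 1\<^sub>m (n*n)" and Bc: "B \<in> carrier_mat (n*n) (n*n)"
    by auto
  have "B *\<^sub>v ones = B *\<^sub>v ((1\<^sub>m (n*n) - A) *\<^sub>v mv)" using sol by simp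
  also have "\<dots> = (B * (1\<^sub>m (n*n) - A)) *\<^sub>v mv" by (rule assoc_mult_mat_vec[OF Bc IA mv, symmetric])
  also have "\<dots> = mv" using BI mv by simp
  finally have Bones: "B *\<^sub>v ones = mv" .
  have "meeting_time n Pp Pe i j = ennreal ((B *\<^sub>v Matrix.vec (n*n) (\<lambda>_. 1)) $ (j*n+i))"
    if ij: "i < n" "j < n" for i j
  proof -
    have a: "j*n+i < n*n" using lin_lt ij .
    have "meeting_time n Pp Pe i j = ennreal (\<Sum>t. qv t $ (j*n+i))"
      by (rule meeting_time_eq(2)[OF ij c bd[OF a]])
    also have "(\<Sum>t. qv t $ (j*n+i)) = (B *\<^sub>v Matrix.vec (n*n) (\<lambda>_. 1)) $ (j*n+i)"
      using Bones a by (simp add: ones_def mv_def)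
    finally show ?thesis .
  qed
  with B show ?thesis by blast
qed

end

theorem theorem1:
  fixes n :: nat and Pp Pe :: "real mat"
  assumes n: "n > 0"
    and Pp: "row_stochastic n Pp" and Pe: "row_stochastic n Pe"
  defines "A \<equiv> kron Pe Pp * E_mat n"
  shows
   "((\<forall>i<n. \<forall>j<n. meeting_time n Pp Pe i j < \<infinity>) \<longleftrightarrow>
     (\<forall>i<n. \<forall>j<n. \<exists>k<n. \<exists>xs ys. is_walk n Pp xs \<and> is_walk n Pe ys \<and>
         length xs = length ys \<and> length xs \<ge> 2 \<and>
         hd xs = i \<and> last xs = k \<and> hd ys = j \<and> last ys = k)) \<and>
    ((\<forall>i<n. \<forall>j<n. meeting_time n Pp Pe i j < \<infinity>) \<longleftrightarrow>
     (\<forall>i<n. \<forall>j<n. \<exists>k<n. \<exists>zs. is_walk (n*n) (kron Pe Pp) zs \<and> length zs \<ge> 2 \<and>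
         hd zs = j*n+i \<and> last zs = k*n+k)) \<and>
    ((\<forall>i<n. \<forall>j<n. meeting_time n Pp Pe i j < \<infinity>) \<longleftrightarrow>
     spectral_radius (map_mat complex_of_real A) < 1) \<and>
    ((\<forall>i<n. \<forall>j<n. meeting_time n Pp Pe i j < \<infinity>) \<longrightarrow>
     (\<exists>B. mat_inverse (1\<^sub>m (n*n) - A) = Some B \<and>
        (\<forall>i<n. \<forall>j<n. meeting_time n Pp Pe i j =
            ennreal ((B *\<^sub>v Matrix.vec (n*n) (\<lambda>_. 1)) $ (j*n+i)))))"
proof -
  interpret m: mt n Pp Pe by (rule mt.intro) (rule n Pp Pe)+
  have AA: "A = m.A" unfolding A_def m.A_def m.K_def ..
  have KK: "kron Pe Pp = m.K" unfolding m.K_def ..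
  define I where "I \<longleftrightarrow> (\<forall>i<n. \<forall>j<n. meeting_time n Pp Pe i j < \<infinity>)"
  define II where "II \<longleftrightarrow> (\<forall>i<n. \<forall>j<n. \<exists>k<n. \<exists>xs ys. is_walk n Pp xs \<and> is_walk n Pe ys \<and>
         length xs = length ys \<and> length xs \<ge> 2 \<and>
         hd xs = i \<and> last xs = k \<and> hd ys = j \<and> last ys = k)"
  define III where "III \<longleftrightarrow> (\<forall>i<n. \<forall>j<n. \<exists>k<n. \<exists>zs. is_walk (n*n) (kron Pe Pp) zs \<and> length zs \<ge> 2 \<and>
         hd zs = j*n+i \<and> last zs = k*n+k)"
  define IV where "IV \<longleftrightarrow> spectral_radius (map_mat complex_of_real A) < 1"
  define V where "V \<longleftrightarrow> (\<exists>B. mat_inverse (1\<^sub>m (n*n) - A) = Some B \<and>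
        (\<forall>i<n. \<forall>j<n. meeting_time n Pp Pe i j =
            ennreal ((B *\<^sub>v Matrix.vec (n*n) (\<lambda>_. 1)) $ (j*n+i))))"
  have 12: "I \<Longrightarrow> II" unfolding I_def II_def using m.finite_walks by blast
  have 23: "II \<Longrightarrow> III" unfolding II_def III_def KK
  proof (intro allI impI)
    fix i j assume H: "\<forall>i<n. \<forall>j<n. \<exists>k<n. \<exists>xs ys. is_walk n Pp xs \<and> is_walk n Pe ys \<and>
         length xs = length ys \<and> length xs \<ge> 2 \<and>
         hd xs = i \<and> last xs = k \<and> hd ys = j \<and> last ys = k" and ij: "i < n" "j < n"
    then obtain k xs ys where "k < n" "is_walk n Pp xs" "is_walk n Pe ys" "length xs = length ys" "length xs \<ge> 2"
         "hd xs = i" "last xs = k" "hd ys = j" "last ys = k" by blast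
    from m.walks_kron[OF ij this] show "\<exists>k<n. \<exists>zs. is_walk (n*n) m.K zs \<and> length zs \<ge> 2 \<and>
         hd zs = j*n+i \<and> last zs = k*n+k" using \<open>k < n\<close> by blast
  qed
  have 34: "III \<Longrightarrow> IV" unfolding IV_def AA
  proof (rule m.sr_less)
    fix a assume III and a: "a < n*n"
    have "a div n < n" "a mod n < n" using a by (simp_all add: div_mod_lt mod_lt)
    with \<open>III\<close> obtain k zs where "k < n" "is_walk (n*n) (kron Pe Pp) zs" "length zs \<ge> 2"
         "hd zs = (a div n)*n + a mod n" "last zs = k*n+k" unfolding III_def by blast
    then show "\<exists>k<n. \<exists>zs. is_walk (n*n) m.K zs \<and> length zs \<ge> 2 \<and> hd zs = a \<and> last zs = k*n+k"
      unfolding KK by (metis div_mult_mod_eq)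
  qed
  have 45: "IV \<Longrightarrow> V" unfolding IV_def V_def AA by (rule m.formula)
  have 51: "V \<Longrightarrow> I" unfolding V_def I_def by auto
  have "I \<longrightarrow> V" using 12 23 34 45 by blast
  then show ?thesis
    unfolding I_def[symmetric] II_def[symmetric] III_def[symmetric] IV_def[symmetric] V_def[symmetric]
    using 12 23 34 45 51 by blast
qed

end
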